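(* Let $k\geq2$, $n$, $r$ be positive integers with $n<r<\frac{(k-1)(2n)}{k}$, and let $\mathcal{F}\subseteq\mathcal{H}^r(M_n)$ be $k$-wise intersecting. Let $\sigma$ be a good cyclic ordering such that $|\mathcal{F}_\sigma|=r$ and every member of $\mathcal{F}_\sigma$ contains $\sigma(2n)$. Let $\mu$ be obtained from $\sigma$ by exchanging the entries in positions $n-1$ and $2n-1$. If $|\mathcal{F}_\mu|=r$, then every member of $\mathcal{F}_\mu$ contains $\sigma(2n)$.
   Context: $M_n$ is the graph with vertex set $\{1,\dots,2n\}$ and edges $\{j,n+j\}$, $j\in[n]$; the two endpoints of an edge are partners. $\mathcal{H}^r(M_n)$ is the family of $r$-element vertex sets that are either independent or contain a maximum independent set (i.e. contain one endpoint of every edge). A family is $k$-wise intersecting if any $k$ of its members have nonempty common intersection. A good cyclic ordering is a bijection $\sigma$ from positions $[2n]$ to the vertex set such that for every $j\in[n]$, $\sigma(j)$ and $\sigma(j+n)$ are partners. A $\sigma$-interval of length $r$ is $\{\sigma(x),\sigma(x+1),\dots,\sigma(x+r-1)\}$ for some $x\in[2n]$, indices modulo $2n$; $\mathcal{F}_\sigma$ is the set of members of $\mathcal{F}$ that are $\sigma$-intervals. *)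

theory Defs
  imports Main
begin

text \<open>The graph M_n: vertex set {1..2n}, edges {j, n+j} for j in {1..n}.\<close>

definition partners :: "nat \<Rightarrow> nat \<Rightarrow> nat \<Rightarrow> bool" where
  "partners n a b \<longleftrightarrow> (\<exists>j\<in>{1..n}. {a, b} = {j, n + j})"

definition indep_M :: "nat \<Rightarrow> nat set \<Rightarrow> bool" where
  "indep_M n A \<longleftrightarrow> A \<subseteq> {1..2*n} \<and> (\<forall>j\<in>{1..n}. \<not> (j \<in> A \<and> n + j \<in> A))"

definition max_indep_M :: "nat \<Rightarrow> nat set \<Rightarrow> bool" where
  "max_indep_M n I \<longleftrightarrow> indep_M n I \<and> (\<forall>j\<in>{1..n}. j \<in> I \<or> n + j \<in> I)"

definition H_M :: "nat \<Rightarrow> nat \<Rightarrow> nat set set" where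
  "H_M r n = {A. A \<subseteq> {1..2*n} \<and> card A = r \<and>
                 (indep_M n A \<or> (\<exists>I. I \<subseteq> A \<and> max_indep_M n I))}"

definition k_wise_intersecting :: "nat \<Rightarrow> 'a set set \<Rightarrow> bool" where
  "k_wise_intersecting k F \<longleftrightarrow>
     (\<forall>G :: nat \<Rightarrow> 'a set. (\<forall>i<k. G i \<in> F) \<longrightarrow> (\<Inter>i<k. G i) \<noteq> {})"

definition good_cyclic_ordering :: "nat \<Rightarrow> (nat \<Rightarrow> nat) \<Rightarrow> bool" where
  "good_cyclic_ordering n \<sigma> \<longleftrightarrow> bij_betw \<sigma> {1..2*n} {1..2*n} \<and>
     (\<forall>j\<in>{1..n}. partners n (\<sigma> j) (\<sigma> (j + n)))"

text \<open>sigma-interval of length r starting at position x (positions taken modulo 2n in {1..2n}).\<close>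
definition cyc_interval :: "nat \<Rightarrow> (nat \<Rightarrow> nat) \<Rightarrow> nat \<Rightarrow> nat \<Rightarrow> nat set" where
  "cyc_interval n \<sigma> r x = {\<sigma> (((x - 1 + i) mod (2*n)) + 1) | i. i < r}"

definition F_sigma :: "nat \<Rightarrow> nat \<Rightarrow> (nat \<Rightarrow> nat) \<Rightarrow> nat set set \<Rightarrow> nat set set" where
  "F_sigma n r \<sigma> F = {A \<in> F. \<exists>x\<in>{1..2*n}. A = cyc_interval n \<sigma> r x}"

definition swap_pos :: "(nat \<Rightarrow> nat) \<Rightarrow> nat \<Rightarrow> nat \<Rightarrow> nat \<Rightarrow> nat" where
  "swap_pos \<sigma> p q = \<sigma>(p := \<sigma> q, q := \<sigma> p)"

end

theory Submission
  imports Defs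
begin


definition P :: "nat \<Rightarrow> nat \<Rightarrow> nat \<Rightarrow> nat set" where
  "P N r x = {((x - 1 + i) mod N) + 1 | i. i < r}"

lemma cyc_eq: "cyc_interval n \<sigma> r x = \<sigma> ` P (2*n) r x"
  unfolding cyc_interval_def P_def by auto

lemma P_sub: "N > 0 \<Longrightarrow> P N r x \<subseteq> {1..N}"
  unfolding P_def by (auto simp: Suc_le_eq)

lemma memP:
  assumes "1 \<le> x" "x \<le> N" "1 \<le> c" "c \<le> N" "r \<le> N"
  shows "c \<in> P N r x \<longleftrightarrow> (if x \<le> c then c - x < r else c + N - x < r)"
proof
  assume "c \<in> P N r x"
  then obtain i where i: "i < r" "c = ((x - 1 + i) mod N) + 1" unfolding P_def by auto
  show "(if x \<le> c then c - x < r else c + N - x < r)"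
  proof (cases "x - 1 + i < N")
    case True
    then have "c = x + i" using i assms by simp
    then show ?thesis using i by simp
  next
    case False
    then have "(x - 1 + i) mod N = x - 1 + i - N"
      using i assms by (simp add: le_mod_geq)
    then have "c = x + i - N" using i assms False by simp
    then show ?thesis using i assms False by auto
  qed
next
  assume h: "(if x \<le> c then c - x < r else c + N - x < r)"
  show "c \<in> P N r x"
  proof (cases "x \<le> c")
    case True
    have "((x - 1 + (c - x)) mod N) + 1 = c" using True assms by simp
    then show ?thesis using h True unfolding P_def by (auto intro!: exI[of _ "c - x"])
  next
    case False
    have "x - 1 + (c + N - x) = (c - 1) + N" using False assms by simp
    moreover have "((c - 1) + N) mod N = c - 1"
      unfolding mod_add_self2 using assms by (intro mod_less) simp
    ultimately have "((x - 1 + (c + N - x)) mod N) + 1 = c" using assms by simp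
    then show ?thesis using h False unfolding P_def by (auto intro!: exI[of _ "c + N - x"])
  qed
qed

lemma notP1: "1 \<le> x \<Longrightarrow> x + r \<le> c \<Longrightarrow> c \<le> N \<Longrightarrow> r \<le> N \<Longrightarrow> c \<notin> P N r x"
  using memP[of x N c r] by simp

lemma notP2: "1 \<le> c \<Longrightarrow> c < x \<Longrightarrow> x \<le> N \<Longrightarrow> x + r \<le> c + N \<Longrightarrow> r \<le> N \<Longrightarrow> c \<notin> P N r x"
  using memP[of x N c r] by simp

definition tau :: "nat \<Rightarrow> nat \<Rightarrow> nat" where
  "tau n c = (if c = n - 1 then 2*n - 1 else if c = 2*n - 1 then n - 1 else c)"

lemma tau_tau: "n > 0 \<Longrightarrow> tau n (tau n c) = c"
  unfolding tau_def by auto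

lemma mem_tau_img: "n > 0 \<Longrightarrow> c \<in> tau n ` X \<longleftrightarrow> tau n c \<in> X"
  using tau_tau by (metis image_iff)

lemma swap_eq: "n > 0 \<Longrightarrow> swap_pos \<sigma> (n - 1) (2*n - 1) = \<sigma> \<circ> tau n"
  unfolding swap_pos_def tau_def by (auto simp: fun_eq_iff)



lemma cover:
  fixes N n r s k y y' t m c :: nat
  assumes N: "N = 2*n" and rs: "r + s = N" and s1: "1 \<le> s" and sn: "s < n" and ks: "N < k*s"
    and y1: "1 \<le> y" and ys: "y < s" and yn: "n \<le> y'" and yns: "y' < n + s" and t: "t \<le> 1"
    and m: "y' + t = y + m*s" and c1: "1 \<le> c" and cN: "c \<le> N"
  defines "rx \<equiv> \<lambda>j. if (j+2)*s < N + y then N + y - s - j*s else N"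
  defines "xp \<equiv> \<lambda>i. if i \<le> m then y + (i-1)*s else rx (i - m - 1)"
  defines "X \<equiv> \<lambda>i. if i = 0 then tau n ` P N r y else if i = 1 then tau n ` P N r y' else P N r (xp i)"
  shows "\<exists>i<k. c \<notin> X i"
proof -
  have n0: "n > 0" using sn by simp
  have k2: "2 < k"
  proof (rule ccontr)
    assume "\<not> 2 < k" then have "k*s \<le> 2*s" by (intro mult_le_mono1) simp
    then show False using ks N sn by linarith
  qed
  have rN: "r \<le> N" using rs by simp
  consider (A) "c = n - 1 \<or> c = N \<or> c < y \<or> (N + y \<le> c + s \<and> c + 2 \<le> N)"
    | (B) "c = N - 1 \<or> (y' \<le> c + s \<and> c < y' \<and> c \<noteq> n - 1)"
    | (C) "y \<le> c \<and> c + s < y'"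
    | (D) "y' \<le> c \<and> c + s < N + y"
    using N cN by linarith
  then show ?thesis
  proof cases
    case A
    have "tau n c \<notin> P N r y"
    proof (cases "c = n - 1")
      case True
      then have "tau n c = N - 1" unfolding tau_def N by simp
      then show ?thesis by (simp, intro notP1) (use N rs ys y1 sn in linarith)+
    next
      case False
      then have "c \<noteq> 2*n - 1" using A N ys sn by auto
      then have "tau n c = c" using False unfolding tau_def by simp
      moreover have "c \<notin> P N r y"
      proof (cases "y \<le> c")
        case True then show ?thesis by (intro notP1) (use A False N rs ys y1 sn c1 cN in linarith)+
      next
        case False then show ?thesis by (intro notP2) (use A N rs ys y1 sn c1 cN in linarith)+
      qed
      ultimately show ?thesis by simp
    qed
    then have "c \<notin> X 0" unfolding X_def using mem_tau_img[OF n0] by simp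
    then show ?thesis using k2 by (intro exI[of _ 0]) simp
  next
    case B
    have "tau n c \<notin> P N r y'"
    proof (cases "c = N - 1")
      case True
      then have "tau n c = n - 1" unfolding tau_def N by simp
      then show ?thesis by (simp, intro notP2) (use N rs yns yn sn in linarith)+
    next
      case False
      then have "c \<noteq> 2*n - 1" "c \<noteq> n - 1" using B N by auto
      then have "tau n c = c" unfolding tau_def by simp
      then show ?thesis by (simp, intro notP2) (use B False N rs yns yn sn c1 cN in linarith)+
    qed
    then have "c \<notin> X 1" unfolding X_def using mem_tau_img[OF n0] by simp
    then show ?thesis using k2 by (intro exI[of _ 1]) simp
  next
    case C
    define q where "q = (c - y) div s"
    have q1: "q*s \<le> c - y" unfolding q_def using div_times_less_eq_dividend by blast
    have q2: "c - y < q*s + s"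
    proof -
      have "(c-y) mod s < s" using s1 by simp
      moreover have "q*s + (c-y) mod s = c - y" unfolding q_def by (rule div_mult_mod_eq)
      ultimately show ?thesis by linarith
    qed
    have "(q+1)*s = q*s + s" by simp
    then have "(q+1)*s < m*s" using q1 C m t by linarith
    then have "q + 1 < m" using mult_less_cancel2 by blast
    then have qm: "q + 2 \<le> m" by simp
    have xpq: "xp (q+2) = y + (q+1)*s" unfolding xp_def using qm by simp
    have "c \<notin> P N r (y + (q+1)*s)"
    proof -
      have e: "y + (q+1)*s = y + q*s + s" by simp
      show ?thesis unfolding e by (intro notP2) (use q1 q2 C rs N yns c1 cN sn in linarith)+
    qed
    then have "c \<notin> X (q+2)" unfolding X_def using xpq by simp
    moreover have "q + 2 < k"
    proof -
      have "m*s \<le> N" using m yns N t sn by linarith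
      then have "m * s < k * s" using ks by linarith
      then have "m < k" using mult_less_cancel2 by blast
      then show ?thesis using qm by simp
    qed
    ultimately show ?thesis by blast
  next
    case D
    define q where "q = (N + y - s - 1 - c) div s"
    have q1: "q*s \<le> N + y - s - 1 - c" unfolding q_def using div_times_less_eq_dividend by blast
    have q2: "N + y - s - 1 - c < q*s + s"
    proof -
      have "(N + y - s - 1 - c) mod s < s" using s1 by simp
      moreover have "q*s + (N + y - s - 1 - c) mod s = N + y - s - 1 - c" unfolding q_def by (rule div_mult_mod_eq)
      ultimately show ?thesis by linarith
    qed
    have "(m+1+q)*s = m*s + s + q*s" by (simp add: algebra_simps)
    then have "(m+1+q)*s < k*s"
      using q1 m t D ks by linarith
    then have ik: "m+1+q < k" using mult_less_cancel2 by blast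
    have "(q+2)*s = q*s + 2*s" by (simp add: algebra_simps)
    then have "(q+2)*s < N + y" using q1 D yn sn by linarith
    then have rxq: "rx q = N + y - s - q*s" unfolding rx_def by simp
    have xpq: "xp (m+1+q) = N + y - s - q*s" unfolding xp_def using rxq by simp
    have "c \<notin> P N r (N + y - s - q*s)"
      by (intro notP2) (use q1 q2 D rs N yns c1 cN ys in linarith)+
    have m0: "m \<noteq> 0"
    proof
      assume "m = 0" then show False using m ys yn sn by simp
    qed
    then have "c \<notin> X (m+1+q)" unfolding X_def using xpq \<open>c \<notin> P N r (N + y - s - q*s)\<close> by simp
    then show ?thesis using ik by blast
  qed
qed



lemma xp_range:
  fixes N n r s k y y' t m i :: nat
  assumes N: "N = 2*n" and s1: "1 \<le> s" and sn: "s < n"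
    and y1: "1 \<le> y" and ys: "y < s" and yn: "n \<le> y'" and yns: "y' < n + s" and t: "t \<le> 1"
    and m: "y' + t = y + m*s" and i2: "2 \<le> i"
  defines "rx \<equiv> \<lambda>j. if (j+2)*s < N + y then N + y - s - j*s else N"
  defines "xp \<equiv> \<lambda>i. if i \<le> m then y + (i-1)*s else rx (i - m - 1)"
  shows "s + 1 \<le> xp i \<and> xp i \<le> N"
proof (cases "i \<le> m")
  case True
  have a: "1*s \<le> (i-1)*s" using i2 by (intro mult_le_mono1) simp
  have b: "(i-1)*s \<le> (m-1)*s" using True by (intro mult_le_mono1) simp
  have c: "(m-1)*s + s = m*s" using True i2 by (cases m) auto
  have "xp i = y + (i-1)*s" unfolding xp_def using True by simp
  then show ?thesis using a b c y1 m t yns N sn by linarith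
next
  case False
  then show ?thesis unfolding xp_def rx_def using ys y1 N sn by auto
qed

lemma pair:
  fixes Y :: "nat set" and N n s :: nat
  assumes N: "N = 2*n" and s1: "1 \<le> s" and sn: "s < n"
    and YN: "Y \<subseteq> {1..N} - {s}" and cY: "N - s \<le> card Y"
    and y0: "y0 \<in> Y" "1 \<le> y0" "y0 < s"
  shows "\<exists>y y' t m. y \<in> Y \<and> y' \<in> Y \<and> 1 \<le> y \<and> y < s \<and> n \<le> y' \<and> y' < n+s \<and> t \<le> 1 \<and> y' + t = y + m*s"
proof (rule ccontr)
  assume H: "\<not> ?thesis"
  define B0 where "B0 = Y \<inter> {1..<s}"
  define Y1 where "Y1 = Y \<inter> {n..<n+s}"
  define Oth where "Oth = {s+1..N} - {n..<n+s}"
  have fin: "finite Y" using YN finite_subset by blast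
  have "Y \<subseteq> B0 \<union> Y1 \<union> Oth" using YN unfolding B0_def Y1_def Oth_def by auto
  then have "card Y \<le> card (B0 \<union> Y1 \<union> Oth)" by (intro card_mono) (auto simp: B0_def Y1_def Oth_def)
  also have "\<dots> \<le> card B0 + card Y1 + card Oth" by (metis card_Un_le add_le_mono1 le_trans)
  finally have c1: "card Y \<le> card B0 + card Y1 + card Oth" .
  have "card Oth = (N - s) - s"
  proof -
    have "{n..<n+s} \<subseteq> {s+1..N}" using N sn by auto
    then have "card Oth = card {s+1..N} - card {n..<n+s}" unfolding Oth_def by (simp add: card_Diff_subset)
    then show ?thesis by simp
  qed
  then have cB: "s \<le> card B0 + card Y1" using c1 cY N sn by linarith
  have B0ne: "B0 \<noteq> {}" using y0 unfolding B0_def by auto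
  have finB: "finite B0" unfolding B0_def by simp
  define y1 where "y1 = Min B0"
  have y1B: "y1 \<in> B0" unfolding y1_def using B0ne finB by simp
  have y1ge: "1 \<le> y1" using y1B unfolding B0_def by simp
  have "(\<lambda>x. x mod s) ` Y1 \<subseteq> {0..<s} - insert (y1 - 1) B0"
  proof
    fix z assume "z \<in> (\<lambda>x. x mod s) ` Y1"
    then obtain y' where y': "y' \<in> Y1" "z = y' mod s" by auto
    have dm: "y' = (y' div s) * s + y' mod s" by simp
    have "z < s" using y' s1 by simp
    moreover have "z \<notin> B0"
    proof
      assume "z \<in> B0"
      then have "y' + 0 = z + (y' div s) * s" using y' dm by linarith
      moreover have "z \<in> Y" "1 \<le> z" "z < s" "y' \<in> Y" "n \<le> y'" "y' < n + s"
        using \<open>z \<in> B0\<close> y' unfolding B0_def Y1_def by auto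
      ultimately show False using H by blast
    qed
    moreover have "z \<noteq> y1 - 1"
    proof
      assume "z = y1 - 1"
      then have "y' + 1 = y1 + (y' div s) * s" using y' dm y1ge by linarith
      moreover have "y1 \<in> Y" "1 \<le> y1" "y1 < s" "y' \<in> Y" "n \<le> y'" "y' < n + s"
        using y1B y' unfolding B0_def Y1_def by auto
      moreover have "(1::nat) \<le> 1" by simp
      ultimately show False using H by blast
    qed
    ultimately show "z \<in> {0..<s} - insert (y1 - 1) B0" by simp
  qed
  moreover have "inj_on (\<lambda>x. x mod s) Y1"
  proof
    fix a b assume ab: "a \<in> Y1" "b \<in> Y1" "a mod s = b mod s"
    show "a = b"
    proof (rule ccontr)
      assume "a \<noteq> b"
      then consider "a < b" | "b < a" by linarith
      then show False
      proof cases
        case 1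
        then have "s dvd b - a" using ab mod_eq_dvd_iff_nat[of a b s] by simp
        moreover have "0 < b - a" "b - a < s" using 1 ab unfolding Y1_def by auto
        ultimately show False by (meson nat_dvd_not_less)
      next
        case 2
        then have "s dvd a - b" using ab mod_eq_dvd_iff_nat[of b a s] by simp
        moreover have "0 < a - b" "a - b < s" using 2 ab unfolding Y1_def by auto
        ultimately show False by (meson nat_dvd_not_less)
      qed
    qed
  qed
  ultimately have "card Y1 \<le> card ({0..<s} - insert (y1 - 1) B0)"
    by (metis card_image card_mono finite_Diff finite_atLeastLessThan)
  also have "\<dots> = s - card (insert (y1 - 1) B0)"
    by (subst card_Diff_subset) (use y1B in \<open>auto simp: B0_def finB\<close>)
  also have "card (insert (y1 - 1) B0) = card B0 + 1"
  proof -
    have "y1 - 1 \<notin> B0"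
    proof
      assume "y1 - 1 \<in> B0"
      then have "y1 \<le> y1 - 1" unfolding y1_def using finB by simp
      then show False using y1ge by simp
    qed
    then show ?thesis using finB by simp
  qed
  finally have "card Y1 \<le> s - (card B0 + 1)" .
  moreover have "card B0 \<le> card {1..<s}" unfolding B0_def by (intro card_mono) auto
  ultimately show False using cB s1 by simp
qed



lemma tau_fix_set:
  assumes "n > 0" "n - 1 \<in> X" "2*n - 1 \<in> X"
  shows "tau n ` X = X"
proof
  show "tau n ` X \<subseteq> X" using assms unfolding tau_def by auto
  show "X \<subseteq> tau n ` X"
  proof
    fix c assume "c \<in> X"
    then have "tau n c \<in> X" using assms unfolding tau_def by auto
    then show "c \<in> tau n ` X" using mem_tau_img[OF assms(1)] by simp
  qed
qed

lemma tau_sub: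
  assumes "n \<ge> 2" "X \<subseteq> {1..2*n}"
  shows "tau n ` X \<subseteq> {1..2*n}"
  using assms unfolding tau_def by auto

theorem lemma3p2:
  fixes k n r :: nat and F :: "nat set set" and \<sigma> :: "nat \<Rightarrow> nat"
  assumes "k \<ge> 2" and "n > 0" and "r > 0"
    and "n < r" and "k * r < (k - 1) * (2 * n)"
    and "F \<subseteq> H_M r n"
    and "k_wise_intersecting k F"
    and "good_cyclic_ordering n \<sigma>"
    and "card (F_sigma n r \<sigma> F) = r"
    and "\<forall>A\<in>F_sigma n r \<sigma> F. \<sigma> (2*n) \<in> A"
    and "card (F_sigma n r (swap_pos \<sigma> (n - 1) (2*n - 1)) F) = r"
  shows "\<forall>A\<in>F_sigma n r (swap_pos \<sigma> (n - 1) (2*n - 1)) F. \<sigma> (2*n) \<in> A"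
proof -
  note k2 = assms(1) and n0 = assms(2) and nr = assms(4) and kr = assms(5)
  note kw = assms(7) and good = assms(8) and cS = assms(9) and allS = assms(10) and cM = assms(11)
  define N where "N = 2*n"
  define s where "s = N - r"
  have rN: "r < N"
  proof (rule ccontr)
    assume "\<not> r < N"
    then have "k*N \<le> k*r" by simp
    moreover have "(k-1)*N \<le> k*N" by (intro mult_le_mono1) simp
    ultimately show False using kr unfolding N_def by linarith
  qed
  have e1: "k*s = k*N - k*r" unfolding s_def by (simp add: diff_mult_distrib2)
  have e2: "(k-1)*N = k*N - 1*N" by (simp add: diff_mult_distrib)
  have "k*r \<le> k*N" using rN by simp
  then have ks: "N < k*s" using e1 e2 kr unfolding N_def by simp
  have rs: "r + s = N" unfolding s_def using rN by simp
  have s1: "1 \<le> s" using rN unfolding s_def by simp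
  have sn: "s < n" using nr n0 unfolding s_def N_def by linarith
  have n2: "n \<ge> 2" using s1 sn by simp
  have injs: "inj_on \<sigma> {1..N}" using good unfolding good_cyclic_ordering_def bij_betw_def N_def by simp
  have PS: "\<And>x. P N r x \<subseteq> {1..N}" using P_sub n0 unfolding N_def by simp
  have mem_inj: "\<And>c X. c \<in> {1..N} \<Longrightarrow> X \<subseteq> {1..N} \<Longrightarrow> \<sigma> c \<in> \<sigma> ` X \<longleftrightarrow> c \<in> X"
    using injs by (metis (no_types, lifting) image_eqI inj_on_image_mem_iff)
  have FS: "\<And>A. A \<in> F_sigma n r \<sigma> F \<longleftrightarrow> A \<in> F \<and> (\<exists>x\<in>{1..N}. A = \<sigma> ` P N r x)"
    unfolding F_sigma_def cyc_eq N_def by auto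
  have NinP: "\<And>x. x \<in> {1..N} \<Longrightarrow> N \<in> P N r x \<longleftrightarrow> s + 1 \<le> x"
    using rs by (auto simp: memP)
  have Sin: "\<And>x. x \<in> {s+1..N} \<Longrightarrow> \<sigma> ` P N r x \<in> F"
  proof (rule ccontr)
    fix x0 assume x0: "x0 \<in> {s+1..N}" and nF: "\<sigma> ` P N r x0 \<notin> F"
    have "F_sigma n r \<sigma> F \<subseteq> (\<lambda>x. \<sigma> ` P N r x) ` ({s+1..N} - {x0})"
    proof
      fix A assume A: "A \<in> F_sigma n r \<sigma> F"
      then obtain x where x: "x \<in> {1..N}" "A = \<sigma> ` P N r x" "A \<in> F" using FS by blast
      have "\<sigma> N \<in> A" using allS A unfolding N_def by simp
      then have "N \<in> P N r x" using x mem_inj[of N "P N r x"] PS rN by simp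
      then have "s + 1 \<le> x" using NinP x by simp
      moreover have "x \<noteq> x0" using x nF by auto
      ultimately show "A \<in> (\<lambda>x. \<sigma> ` P N r x) ` ({s+1..N} - {x0})" using x by auto
    qed
    then have "card (F_sigma n r \<sigma> F) \<le> card ((\<lambda>x. \<sigma> ` P N r x) ` ({s+1..N} - {x0}))"
      by (intro card_mono) auto
    also have "\<dots> \<le> card ({s+1..N} - {x0})" by (rule card_image_le) simp
    also have "\<dots> = N - s - 1" using x0 by simp
    finally show False using cS rs s1 assms(3) by linarith
  qed
  have swap: "swap_pos \<sigma> (n - 1) (2*n - 1) = \<sigma> \<circ> tau n" using swap_eq n0 by simp
  define Y where "Y = {x \<in> {1..N}. \<sigma> ` tau n ` P N r x \<in> F}"
  have FM: "F_sigma n r (swap_pos \<sigma> (n - 1) (2*n - 1)) F = (\<lambda>x. \<sigma> ` tau n ` P N r x) ` Y"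
    unfolding F_sigma_def cyc_eq swap Y_def N_def image_comp by auto
  have cY: "N - s \<le> card Y"
  proof -
    have "r \<le> card Y" using cM card_image_le[of Y "\<lambda>x. \<sigma> ` tau n ` P N r x"] unfolding FM Y_def by simp
    then show ?thesis using rs by simp
  qed
  have sY: "s \<notin> Y"
  proof
    assume "s \<in> Y"
    have i1: "n - 1 \<in> P N r s \<longleftrightarrow> (if s \<le> n - 1 then n - 1 - s < r else n - 1 + N - s < r)"
      by (rule memP) (use sn rs n2 s1 N_def in linarith)+
    have i2: "s \<le> n - 1 \<and> n - 1 - s < r" using sn rs n2 N_def by linarith
    have j1: "N - 1 \<in> P N r s \<longleftrightarrow> (if s \<le> N - 1 then N - 1 - s < r else N - 1 + N - s < r)"
      by (rule memP) (use sn rs n2 s1 N_def in linarith)+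
    have j2: "s \<le> N - 1 \<and> N - 1 - s < r" using sn rs n2 N_def by linarith
    have "N - 1 \<in> P N r s" using j1 j2 by simp
    then have "2*n - 1 \<in> P N r s" unfolding N_def .
    moreover have "n - 1 \<in> P N r s" using i1 i2 by simp
    ultimately have "tau n ` P N r s = P N r s" using tau_fix_set n0 by simp
    then have "\<sigma> ` P N r s \<in> F" using \<open>s \<in> Y\<close> unfolding Y_def by simp
    then have "\<sigma> ` P N r s \<in> F_sigma n r \<sigma> F" using FS s1 rs by auto
    then have "\<sigma> N \<in> \<sigma> ` P N r s" using allS unfolding N_def by simp
    then have "N \<in> P N r s" using mem_inj[of N "P N r s"] PS rN by simp
    then show False using NinP s1 rs by simp
  qed
  have XS: "\<And>x. tau n ` P N r x \<subseteq> {1..N}" using tau_sub[OF n2] PS unfolding N_def by simp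
  show ?thesis
  proof (rule ccontr)
    assume "\<not> ?thesis"
    then obtain x0 where x0: "x0 \<in> Y" "\<sigma> N \<notin> \<sigma> ` tau n ` P N r x0" unfolding FM N_def by auto
    have "N \<notin> tau n ` P N r x0" using x0(2) by blast
    moreover have "tau n N = N" unfolding tau_def N_def using n0 by simp
    ultimately have "N \<notin> P N r x0" using mem_tau_img[OF n0] by simp
    moreover have x01: "x0 \<in> {1..N}" using x0(1) unfolding Y_def by blast
    ultimately have "\<not> s + 1 \<le> x0" using NinP by blast
    moreover have "x0 \<noteq> s" using sY x0(1) by blast
    ultimately have x0s: "1 \<le> x0" "x0 < s" using x01 by auto
    have YN: "Y \<subseteq> {1..N} - {s}" using sY unfolding Y_def by auto
    obtain y y' t m where p: "y \<in> Y" "y' \<in> Y" "1 \<le> y" "y < s" "n \<le> y'" "y' < n+s" "t \<le> 1" "y' + t = y + m*s"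
      using pair[OF N_def s1 sn YN cY x0(1) x0s] by blast
    define rx where "rx = (\<lambda>j. if (j+2)*s < N + y then N + y - s - j*s else N)"
    define xp where "xp = (\<lambda>i. if i \<le> m then y + (i-1)*s else rx (i - m - 1))"
    define X where "X = (\<lambda>i. if i = 0 then tau n ` P N r y else if i = 1 then tau n ` P N r y' else P N r (xp i))"
    have Xsub: "\<And>i. X i \<subseteq> {1..N}" unfolding X_def using XS PS by auto
    have GF: "\<forall>i<k. \<sigma> ` X i \<in> F"
    proof (intro allI impI)
      fix i assume "i < k"
      show "\<sigma> ` X i \<in> F"
      proof (cases "i \<le> 1")
        case True
        then show ?thesis using p unfolding X_def Y_def by (cases i) auto
      next
        case False
        have "s + 1 \<le> xp i \<and> xp i \<le> N" unfolding xp_def rx_def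
          by (rule xp_range[OF N_def s1 sn p(3-8)]) (use False in simp)
        then show ?thesis using Sin False unfolding X_def by simp
      qed
    qed
    moreover have "(\<forall>i<k. \<sigma> ` X i \<in> F) \<longrightarrow> (\<Inter>i<k. \<sigma> ` X i) \<noteq> {}"
      using kw unfolding k_wise_intersecting_def by (rule spec)
    ultimately have ne: "(\<Inter>i<k. \<sigma> ` X i) \<noteq> {}" by (rule rev_mp)
    then obtain v where v: "\<And>i. i < k \<Longrightarrow> v \<in> \<sigma> ` X i" by blast
    have "v \<in> \<sigma> ` X 0" using v k2 by simp
    then obtain c where c: "c \<in> X 0" "v = \<sigma> c" by blast
    have cN: "c \<in> {1..N}" using c Xsub by blast
    have "\<exists>i<k. c \<notin> X i" unfolding X_def xp_def rx_def
      by (rule cover[OF N_def rs s1 sn ks p(3-8)]) (use cN in auto)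
    then obtain i where "i < k" "c \<notin> X i" by blast
    moreover have "\<sigma> c \<in> \<sigma> ` X i" using v \<open>i < k\<close> c by simp
    ultimately show False using mem_inj[OF cN Xsub] by simp
  qed
qed

end
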